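(* In the setting below, suppose $\|\boldsymbol\Theta^*\|_{2\to\infty}\le C_1$, $\|\mathbf A^*\|_{2\to\infty}\le C_2$, $\|\mathbf A\|_{2\to\infty}\le C_2$, $\sigma_r(\mathcal I_{1,i}(\mathbf A))>0$, and $$\|\mathbf Z_{i\cdot}\mathrm{diag}(\boldsymbol\Omega_{i\cdot})\mathbf A\|+\|\mathbf B_{1,i}(\mathbf A)\|+\beta_{1,i}(\mathbf A)\kappa_3(3C_1C_2)\le\min\Big\{\frac{\sigma_r^2(\mathcal I_{1,i}(\mathbf A))}{4\gamma_{1,i}(\mathbf A)\kappa_3(3C_1C_2)},\ \tfrac12\sigma_r(\mathcal I_{1,i}(\mathbf A))C_1\Big\}$$ (the first term of the minimum read as $+\infty$ if its denominator is $0$). Then there exists $\tilde{\boldsymbol\theta}_i$ with $S_{1,i}(\tilde{\boldsymbol\theta}_i;\mathbf A)=\mathbf 0$ and $$\|\tilde{\boldsymbol\theta}_i-\boldsymbol\theta_i^*\|\le2\sigma_r^{-1}(\mathcal I_{1,i}(\mathbf A))\big\{\|\mathbf Z_{i\cdot}\mathrm{diag}(\boldsymbol\Omega_{i\cdot})\mathbf A\|+\|\mathbf B_{1,i}(\mathbf A)\|+\beta_{1,i}(\mathbf A)\kappa_3(3C_1C_2)\big\},$$ and moreover $\|\tilde{\boldsymbol\theta}_i-\boldsymbol\theta_i^*\|\le C_1$.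
   Context: Deterministic setting: $\phi>0$; $b:\mathbb R\to\mathbb R$ is three times continuously differentiable with $b''>0$; $\boldsymbol\Theta^*\in\mathbb R^{n\times r}$ (rows $\boldsymbol\theta_i^{*T}$), $\mathbf A^*\in\mathbb R^{p\times r}$ (rows $\mathbf a_j^{*T}$), $\mathbf M^*=(m^*_{ij})=\boldsymbol\Theta^*(\mathbf A^* )^T$; $\mathbf A\in\mathbb R^{p\times r}$ with rows $\mathbf a_j^T$; $C_1,C_2>0$; $i\in[n]$ fixed; $y_{ij}\in\mathbb R$ and $\omega_{ij}\in\{0,1\}$ are fixed numbers; $z_{ij}=y_{ij}-b'(m^*_{ij})$, $\mathbf Z_{i\cdot}=(z_{i1},\dots,z_{ip})$, $\mathrm{diag}(\boldsymbol\Omega_{i\cdot})=\mathrm{diag}(\omega_{i1},\dots,\omega_{ip})$. $\kappa_3(\alpha)=\sup_{|x|\le\alpha}|b'''(x)|$. Definitions: $S_{1,i}(\boldsymbol\theta;\mathbf A)=\phi^{-1}\sum_{j=1}^p\omega_{ij}\{y_{ij}-b'(\mathbf a_j^T\boldsymbol\theta)\}\mathbf a_j$; $\mathbf B_{1,i}(\mathbf A)=\sum_{j=1}^p\omega_{ij}b''(m^*_{ij})\mathbf a_j(\mathbf a_j-\mathbf a_j^* )^T\boldsymbol\theta_i^*$; $\mathcal I_{1,i}(\mathbf A)=\sum_{j=1}^p\omega_{ij}b''(m^*_{ij})\mathbf a_j\mathbf a_j^T$; $\beta_{1,i}(\mathbf A)=\sup_{\|\mathbf u\|=1}\sum_j\omega_{ij}((\mathbf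 a_j-\mathbf a_j^* )^T\boldsymbol\theta_i^* )^2|\mathbf a_j^T\mathbf u|$; $\gamma_{1,i}(\mathbf A)=\sup_{\|\mathbf u\|=1}\sum_j\omega_{ij}|\mathbf a_j^T\mathbf u|^3$. $\sigma_r(\cdot)$ is the $r$-th largest singular value; $\|X\|_{2\to\infty}$ the maximal row Euclidean norm. *)

theory Defs
  imports "HOL-Analysis.Analysis"
begin

text \<open>Matrices with rows indexed by a finite type: a matrix X in R^{m x r} is a
  function from row indices to row vectors in R^r.\<close>

definition two_to_inf :: "('m::finite \<Rightarrow> real^'r) \<Rightarrow> real" where
  "two_to_inf X = Max (range (\<lambda>k. norm (X k)))"

text \<open>r-th largest singular value of a square r x r matrix, i.e. the smallest one:
  square root of the smallest eigenvalue of M^T M.\<close>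
definition sigma_min :: "real^'r^'r \<Rightarrow> real" where
  "sigma_min M = sqrt (Min {e. \<exists>v. v \<noteq> 0 \<and> (transpose M ** M) *v v = e *\<^sub>R v})"

definition kappa3 :: "(real \<Rightarrow> real) \<Rightarrow> real \<Rightarrow> real" where
  "kappa3 b3 \<alpha> = (SUP x\<in>{-\<alpha>..\<alpha>}. \<bar>b3 x\<bar>)"

definition S1 :: "real \<Rightarrow> (real \<Rightarrow> real) \<Rightarrow> ('p::finite \<Rightarrow> real) \<Rightarrow> ('p \<Rightarrow> real)
    \<Rightarrow> ('p \<Rightarrow> real^'r) \<Rightarrow> real^'r \<Rightarrow> real^'r" where
  "S1 \<phi> b1 \<omega> y A \<theta> = (1/\<phi>) *\<^sub>R (\<Sum>j\<in>UNIV. (\<omega> j * (y j - b1 (A j \<bullet> \<theta>))) *\<^sub>R A j)"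

definition B1 :: "(real \<Rightarrow> real) \<Rightarrow> ('p::finite \<Rightarrow> real) \<Rightarrow> real^'r \<Rightarrow> ('p \<Rightarrow> real^'r)
    \<Rightarrow> ('p \<Rightarrow> real^'r) \<Rightarrow> real^'r" where
  "B1 b2 \<omega> \<theta>s As A = (\<Sum>j\<in>UNIV. (\<omega> j * b2 (\<theta>s \<bullet> As j) * ((A j - As j) \<bullet> \<theta>s)) *\<^sub>R A j)"

definition I1 :: "(real \<Rightarrow> real) \<Rightarrow> ('p::finite \<Rightarrow> real) \<Rightarrow> real^'r \<Rightarrow> ('p \<Rightarrow> real^'r)
    \<Rightarrow> ('p \<Rightarrow> real^'r) \<Rightarrow> real^'r^'r" where
  "I1 b2 \<omega> \<theta>s As A = (\<chi> k l. \<Sum>j\<in>UNIV. \<omega> j * b2 (\<theta>s \<bullet> As j) * (A j $ k) * (A j $ l))"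

definition beta1 :: "('p::finite \<Rightarrow> real) \<Rightarrow> real^'r \<Rightarrow> ('p \<Rightarrow> real^'r) \<Rightarrow> ('p \<Rightarrow> real^'r) \<Rightarrow> real" where
  "beta1 \<omega> \<theta>s As A = (SUP u\<in>sphere 0 1. \<Sum>j\<in>UNIV. \<omega> j * ((A j - As j) \<bullet> \<theta>s)\<^sup>2 * \<bar>A j \<bullet> u\<bar>)"

definition gamma1 :: "('p::finite \<Rightarrow> real) \<Rightarrow> ('p \<Rightarrow> real^'r) \<Rightarrow> real" where
  "gamma1 \<omega> A = (SUP u\<in>sphere 0 1. \<Sum>j\<in>UNIV. \<omega> j * \<bar>A j \<bullet> u\<bar> ^ 3)"

text \<open>The row vector Z_i diag(Omega_i) A, with z_ij = y_ij - b'(m*_ij).\<close>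
definition ZOA :: "(real \<Rightarrow> real) \<Rightarrow> ('p::finite \<Rightarrow> real) \<Rightarrow> ('p \<Rightarrow> real) \<Rightarrow> real^'r
    \<Rightarrow> ('p \<Rightarrow> real^'r) \<Rightarrow> ('p \<Rightarrow> real^'r) \<Rightarrow> real^'r" where
  "ZOA b1 \<omega> y \<theta>s As A = (\<Sum>j\<in>UNIV. ((y j - b1 (\<theta>s \<bullet> As j)) * \<omega> j) *\<^sub>R A j)"

end

theory Submission
  imports Defs
begin

lemma tr_dot: "(transpose N *v x) \<bullet> (y::real^'n) = x \<bullet> (N *v y)"
  by (metis dot_lmul_matrix transpose_transpose vector_transpose_matrix)

lemma MtM_dot: "((transpose N ** N) *v x) \<bullet> (y::real^'n) = (N *v x) \<bullet> (N *v y)"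
  by (metis matrix_vector_mul_assoc tr_dot)

lemma eig_finite:
  fixes N :: "real^'n^'n"
  shows "finite {e. \<exists>v. v \<noteq> 0 \<and> (transpose N ** N) *v v = e *\<^sub>R v}"
proof -
  define M where "M = transpose N ** N"
  define E where "E = {e. \<exists>v. v \<noteq> 0 \<and> M *v v = e *\<^sub>R v}"
  define V where "V e = (SOME v. v \<noteq> 0 \<and> M *v v = e *\<^sub>R v)" for e
  have V: "V e \<noteq> 0 \<and> M *v V e = e *\<^sub>R V e" if "e \<in> E" for e
    using that unfolding E_def V_def by (metis (mono_tags, lifting) mem_Collect_eq someI_ex)
  have sym: "(M *v x) \<bullet> y = x \<bullet> (M *v y)" for x y
    unfolding M_def MtM_dot by (metis MtM_dot inner_commute)
  have inj: "inj_on V E"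
  proof (rule inj_onI)
    fix e e' assume "e \<in> E" "e' \<in> E" "V e = V e'"
    then have "e *\<^sub>R V e = e' *\<^sub>R V e" "V e \<noteq> 0" using V by metis+
    then show "e = e'" by (metis scaleR_cancel_right)
  qed
  have orth: "pairwise orthogonal (V ` E)"
  proof (clarsimp simp: pairwise_def)
    fix e e' assume ee: "e \<in> E" "e' \<in> E" "V e \<noteq> V e'"
    then have ne: "e \<noteq> e'" by auto
    have "e * (V e \<bullet> V e') = (M *v V e) \<bullet> V e'" using V[OF ee(1)] by simp
    also have "\<dots> = V e \<bullet> (M *v V e')" by (rule sym)
    also have "\<dots> = e' * (V e \<bullet> V e')" using V[OF ee(2)] by simp
    finally have "(e - e') * (V e \<bullet> V e') = 0" by (simp add: algebra_simps)
    with ne show "orthogonal (V e) (V e')" by (simp add: orthogonal_def)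
  qed
  have "0 \<notin> V ` E" using V by auto
  then have "independent (V ` E)" using orth pairwise_orthogonal_independent by blast
  then have "finite (V ` E)" by (rule finiteI_independent)
  then have "finite E" using inj finite_imageD by blast
  then show ?thesis unfolding E_def M_def .
qed

lemma eig_lower:
  fixes N :: "real^'n^'n"
  shows "sqrt (Min {e. \<exists>v. v \<noteq> 0 \<and> (transpose N ** N) *v v = e *\<^sub>R v}) * norm x \<le> norm (N *v x)"
proof -
  define M where "M = transpose N ** N"
  define E where "E = {e. \<exists>v. v \<noteq> 0 \<and> M *v v = e *\<^sub>R v}"
  have finE: "finite E" unfolding E_def M_def by (rule eig_finite)
  have q: "(M *v x) \<bullet> y = (N *v x) \<bullet> (N *v y)" for x y unfolding M_def by (rule MtM_dot)
  have cont: "continuous_on (sphere (0::real^'n) 1) (\<lambda>v. norm (N *v v) ^ 2)"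
    by (intro continuous_intros linear_continuous_on) (simp add: linear_conv_bounded_linear[symmetric])
  have "sphere (0::real^'n) 1 \<noteq> {}" by simp
  then obtain v0 where v0: "v0 \<in> sphere 0 1" and mn: "\<And>v. v \<in> sphere 0 1 \<Longrightarrow> norm (N *v v0) ^ 2 \<le> norm (N *v v) ^ 2"
    using continuous_attains_inf[OF compact_sphere _ cont] by blast
  define m where "m = norm (N *v v0) ^ 2"
  have nv0: "norm v0 = 1" using v0 by simp
  have low: "m * norm v ^ 2 \<le> norm (N *v v) ^ 2" for v
  proof (cases "v = 0")
    case True then show ?thesis by simp
  next
    case False
    have "m \<le> norm (N *v ((1/norm v) *\<^sub>R v)) ^ 2" unfolding m_def by (rule mn) (use False in simp)
    also have "\<dots> = norm (N *v v) ^ 2 / norm v ^ 2"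
      by (simp add: matrix_vector_mult_scaleR power_divide)
    finally show ?thesis using False by (simp add: field_simps)
  qed
  define Q where "Q x = norm (N *v x) ^ 2 - m * norm x ^ 2" for x
  have Qnn: "Q x \<ge> 0" for x using low[of x] by (simp add: Q_def)
  have Q0: "Q v0 = 0" using nv0 by (simp add: Q_def m_def)
  define w where "w = M *v v0 - m *\<^sub>R v0"
  have exp: "Q (v0 - t *\<^sub>R w) = Q v0 - 2 * t * (norm w)^2 + t^2 * Q w" for t
  proof -
    have "(N *v v0) \<bullet> (N *v w) - m * (v0 \<bullet> w) = (norm w)^2"
      by (simp add: q[symmetric] w_def inner_diff_left power2_norm_eq_inner inner_commute)
    moreover have "(N *v w) \<bullet> (N *v v0) = (N *v v0) \<bullet> (N *v w)" "w \<bullet> v0 = v0 \<bullet> w"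
      by (simp_all add: inner_commute)
    ultimately show ?thesis
      unfolding Q_def matrix_vector_mult_diff_distrib matrix_vector_mult_scaleR power2_norm_eq_inner
      by (simp add: inner_diff_left inner_diff_right algebra_simps power2_eq_square)
  qed
  have w0: "w = 0"
  proof (rule ccontr)
    assume "w \<noteq> 0"
    then have wp: "(norm w)^2 > 0" by simp
    define t where "t = (norm w)^2 / (Q w + (norm w)^2)"
    have tp: "t > 0" unfolding t_def using wp Qnn[of w] by (intro divide_pos_pos; linarith)
    have "t * Q w \<le> (norm w)^2"
    proof -
      have d: "Q w + (norm w)^2 > 0" using wp Qnn[of w] by linarith
      have "t * Q w = (norm w)^2 * (Q w / (Q w + (norm w)^2))" unfolding t_def by simp
      also have "\<dots> \<le> (norm w)^2 * 1"
      proof (rule mult_left_mono)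
        show "Q w / (Q w + (norm w)^2) \<le> 1" by (rule divide_le_eq_1_pos[OF d, THEN iffD2]) (use zero_le_power2[of "norm w"] in linarith)
      qed simp
      finally show ?thesis by simp
    qed
    then have "t^2 * Q w \<le> t * (norm w)^2" using tp
      by (metis mult.assoc mult_left_mono less_imp_le power2_eq_square)
    have "t * (norm w)^2 > 0" using tp wp by simp
    then have "Q (v0 - t *\<^sub>R w) < 0" using exp[of t] Q0 \<open>t^2 * Q w \<le> t * (norm w)^2\<close>
      by linarith
    then show False using Qnn[of "v0 - t *\<^sub>R w"] by linarith
  qed
  have "m \<in> E" unfolding E_def using w0 nv0 by (auto simp: w_def intro!: exI[of _ v0])
  then have minle: "Min E \<le> m" using finE by simp
  have Enn: "e \<ge> 0" if eE: "e \<in> E" for e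
  proof -
    obtain v where v: "v \<noteq> 0" "M *v v = e *\<^sub>R v" using eE E_def by auto
    have "e * (v \<bullet> v) = (N *v v) \<bullet> (N *v v)" using q[of v v] v by simp
    moreover have "v \<bullet> v > 0" using v(1) by simp
    moreover have "(N *v v) \<bullet> (N *v v) \<ge> 0" by simp
    ultimately have "e * (v \<bullet> v) \<ge> 0" "v \<bullet> v > 0" by auto
    then have "(e * (v \<bullet> v)) / (v \<bullet> v) \<ge> 0" by (intro divide_nonneg_pos)
    then show ?thesis using \<open>v \<bullet> v > 0\<close> by simp
  qed
  have "Min E \<ge> 0" using finE \<open>m \<in> E\<close> Enn Min_in[of E] by blast
  have "(sqrt (Min E) * norm x)^2 = Min E * (norm x)^2"
    by (simp add: power_mult_distrib \<open>Min E \<ge> 0\<close>)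
  also have "\<dots> \<le> m * (norm x)^2" by (rule mult_right_mono[OF minle]) simp
  also have "\<dots> \<le> (norm (N *v x))^2" by (rule low)
  finally have "(sqrt (Min E) * norm x)^2 \<le> (norm (N *v x))^2" .
  then have "sqrt (Min E) * norm x \<le> norm (N *v x)"
    by (rule power2_le_imp_le) simp
  then show ?thesis unfolding E_def M_def .
qed
lemma taylor2:
  fixes b1 b2 b3 :: "real \<Rightarrow> real"
  assumes db1: "\<And>x. (b1 has_real_derivative b2 x) (at x)"
    and db2: "\<And>x. (b2 has_real_derivative b3 x) (at x)"
    and x: "\<bar>x\<bar> \<le> \<alpha>" and c: "\<bar>c\<bar> \<le> \<alpha>"
    and K: "\<And>t. \<bar>t\<bar> \<le> \<alpha> \<Longrightarrow> \<bar>b3 t\<bar> \<le> K"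
  shows "\<bar>b1 x - b1 c - b2 c * (x - c)\<bar> \<le> K / 2 * (x - c)^2"
proof (cases "x = c")
  case True then show ?thesis by simp
next
  case False
  define diff where "diff m = (if m = 0 then b1 else if m = 1 then b2 else b3)" for m :: nat
  have "\<exists>t. (if x < c then x < t \<and> t < c else c < t \<and> t < x) \<and>
    b1 x = (\<Sum>m<2. (diff m c / fact m) * (x - c)^m) + (diff 2 t / fact 2) * (x - c)^2"
  proof (rule Taylor[of 2 diff b1 "-\<alpha>" \<alpha>])
    show "\<forall>m t. m < 2 \<and> - \<alpha> \<le> t \<and> t \<le> \<alpha> \<longrightarrow> DERIV (diff m) t :> diff (Suc m) t"
    proof (intro allI impI)
      fix m :: nat and t assume "m < 2 \<and> - \<alpha> \<le> t \<and> t \<le> \<alpha>"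
      then have "m = 0 \<or> m = 1" by auto
      then show "DERIV (diff m) t :> diff (Suc m) t"
        using db1 db2 by (auto simp: diff_def)
    qed
  qed (use x c False in \<open>auto simp: diff_def\<close>)
  then obtain t where t: "(if x < c then x < t \<and> t < c else c < t \<and> t < x)"
    and eq: "b1 x = b1 c + b2 c * (x - c) + b3 t / 2 * (x - c)^2"
    by (auto simp: diff_def numeral_2_eq_2)
  have "\<bar>t\<bar> \<le> \<alpha>" using t x c by (auto split: if_splits)
  then have "\<bar>b3 t\<bar> \<le> K" by (rule K)
  have "\<bar>b1 x - b1 c - b2 c * (x - c)\<bar> = \<bar>b3 t\<bar> / 2 * (x - c)^2"
    using eq by (simp add: abs_mult)
  also have "\<dots> \<le> K / 2 * (x - c)^2"
    using \<open>\<bar>b3 t\<bar> \<le> K\<close> by (intro mult_right_mono) auto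
  finally show ?thesis .
qed

lemma two_to_inf_ge: "norm (X k) \<le> two_to_inf (X :: 'm::finite \<Rightarrow> real^'r)"
  unfolding two_to_inf_def by (rule Max_ge) auto

lemma amgm3: assumes "(x::real) \<ge> 0" "y \<ge> 0" shows "x^2 * y \<le> (2 * x^3 + y^3) / 3"
proof -
  have "2 * x^3 + y^3 - 3 * x^2 * y = (x - y)^2 * (2 * x + y)"
    by (simp add: algebra_simps power2_eq_square power3_eq_cube)
  also have "\<dots> \<ge> 0" using assms by simp
  finally show ?thesis by simp
qed

lemma I1_mult:
  "I1 b2 w \<theta>s As A *v d = (\<Sum>j\<in>UNIV. (w j * b2 (\<theta>s \<bullet> As j) * (A j \<bullet> d)) *\<^sub>R A j)"
  unfolding I1_def
  apply (simp add: vec_eq_iff matrix_vector_mult_def inner_vec_def sum_distrib_left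
      sum_distrib_right mult.assoc mult.left_commute sum_component)
  apply (rule allI, subst sum.swap, rule sum.cong, simp, rule sum.cong, simp, simp add: ac_simps)
  done

lemma cube_bound:
  fixes A :: "'p::finite \<Rightarrow> real^'r::finite"
  assumes w: "\<And>j. w j \<ge> 0"
    and g: "\<And>u. u \<in> sphere 0 1 \<Longrightarrow> (\<Sum>j\<in>UNIV. w j * \<bar>A j \<bullet> u\<bar>^3) \<le> \<gamma>"
    and u: "norm u = 1"
  shows "(\<Sum>j\<in>UNIV. w j * (A j \<bullet> d)^2 * \<bar>A j \<bullet> u\<bar>) \<le> \<gamma> * (norm d)^2"
proof (cases "d = 0")
  case True then show ?thesis by simp
next
  case False
  define v where "v = (1 / norm d) *\<^sub>R d"
  have nv: "norm v = 1" using False by (simp add: v_def)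
  have dv: "d = norm d *\<^sub>R v" using False by (simp add: v_def)
  have eq1: "(\<Sum>j\<in>UNIV. w j * (A j \<bullet> d)^2 * \<bar>A j \<bullet> u\<bar>)
      = (norm d)^2 * (\<Sum>j\<in>UNIV. w j * \<bar>A j \<bullet> v\<bar>^2 * \<bar>A j \<bullet> u\<bar>)"
    by (subst dv) (simp add: sum_distrib_left power_mult_distrib algebra_simps)
  have "(\<Sum>j\<in>UNIV. w j * \<bar>A j \<bullet> v\<bar>^2 * \<bar>A j \<bullet> u\<bar>)
      \<le> (\<Sum>j\<in>UNIV. w j * ((2 * \<bar>A j \<bullet> v\<bar>^3 + \<bar>A j \<bullet> u\<bar>^3) / 3))"
  proof (intro sum_mono)
    fix j
    have "\<bar>A j \<bullet> v\<bar>^2 * \<bar>A j \<bullet> u\<bar> \<le> (2 * \<bar>A j \<bullet> v\<bar>^3 + \<bar>A j \<bullet> u\<bar>^3) / 3"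
      by (rule amgm3) auto
    then show "w j * \<bar>A j \<bullet> v\<bar>^2 * \<bar>A j \<bullet> u\<bar> \<le> w j * ((2 * \<bar>A j \<bullet> v\<bar>^3 + \<bar>A j \<bullet> u\<bar>^3) / 3)"
      unfolding mult.assoc by (rule mult_left_mono) (rule w)
  qed
  also have "\<dots> = (2 * (\<Sum>j\<in>UNIV. w j * \<bar>A j \<bullet> v\<bar>^3) + (\<Sum>j\<in>UNIV. w j * \<bar>A j \<bullet> u\<bar>^3)) / 3"
    by (simp add: sum_divide_distrib[symmetric] sum_distrib_left sum.distrib[symmetric] algebra_simps)
  also have "\<dots> \<le> (2 * \<gamma> + \<gamma>) / 3"
    using g[of v] g[of u] nv u by simp
  finally have "(\<Sum>j\<in>UNIV. w j * \<bar>A j \<bullet> v\<bar>^2 * \<bar>A j \<bullet> u\<bar>) \<le> \<gamma>" by simp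
  then have "(norm d)^2 * (\<Sum>j\<in>UNIV. w j * \<bar>A j \<bullet> v\<bar>^2 * \<bar>A j \<bullet> u\<bar>) \<le> (norm d)^2 * \<gamma>"
    by (rule mult_left_mono) simp
  then show ?thesis unfolding eq1 by (simp add: mult.commute)
qed

theorem mainTheorem10:
  fixes \<phi> C1 C2 :: real
    and b b1 b2 b3 :: "real \<Rightarrow> real"
    and Theta :: "'n::finite \<Rightarrow> real^'r::finite"
    and As A :: "'p::finite \<Rightarrow> real^'r"
    and y \<omega> :: "'n \<Rightarrow> 'p \<Rightarrow> real"
    and i :: 'n
  assumes phi_pos: "\<phi> > 0"
    and db: "\<And>x. (b has_real_derivative b1 x) (at x)"
    and db1: "\<And>x. (b1 has_real_derivative b2 x) (at x)"
    and db2: "\<And>x. (b2 has_real_derivative b3 x) (at x)"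
    and cont_b3: "continuous_on UNIV b3"
    and b2_pos: "\<And>x. b2 x > 0"
    and omega01: "\<And>k j. \<omega> k j \<in> {0, 1}"
    and C1_pos: "C1 > 0" and C2_pos: "C2 > 0"
    and Theta_bd: "two_to_inf Theta \<le> C1"
    and As_bd: "two_to_inf As \<le> C2"
    and A_bd: "two_to_inf A \<le> C2"
    and sigma_pos: "sigma_min (I1 b2 (\<omega> i) (Theta i) As A) > 0"
    and small1: "norm (ZOA b1 (\<omega> i) (y i) (Theta i) As A) + norm (B1 b2 (\<omega> i) (Theta i) As A)
                 + beta1 (\<omega> i) (Theta i) As A * kappa3 b3 (3 * C1 * C2)
               \<le> sigma_min (I1 b2 (\<omega> i) (Theta i) As A) * C1 / 2"
    and small2: "gamma1 (\<omega> i) A * kappa3 b3 (3 * C1 * C2) \<noteq> 0 \<Longrightarrow>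
               norm (ZOA b1 (\<omega> i) (y i) (Theta i) As A) + norm (B1 b2 (\<omega> i) (Theta i) As A)
                 + beta1 (\<omega> i) (Theta i) As A * kappa3 b3 (3 * C1 * C2)
               \<le> (sigma_min (I1 b2 (\<omega> i) (Theta i) As A))\<^sup>2
                  / (4 * gamma1 (\<omega> i) A * kappa3 b3 (3 * C1 * C2))"
  shows "\<exists>\<theta>. S1 \<phi> b1 (\<omega> i) (y i) A \<theta> = 0
          \<and> norm (\<theta> - Theta i) \<le> 2 / sigma_min (I1 b2 (\<omega> i) (Theta i) As A)
               * (norm (ZOA b1 (\<omega> i) (y i) (Theta i) As A) + norm (B1 b2 (\<omega> i) (Theta i) As A)
                  + beta1 (\<omega> i) (Theta i) As A * kappa3 b3 (3 * C1 * C2))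
          \<and> norm (\<theta> - Theta i) \<le> C1"
proof -
  define \<theta>s where "\<theta>s = Theta i"
  define w where "w = \<omega> i"
  define yy where "yy = y i"
  define Iv where "Iv = I1 b2 w \<theta>s As A"
  define \<sigma> where "\<sigma> = sigma_min Iv"
  define Z where "Z = ZOA b1 w yy \<theta>s As A"
  define Bv where "Bv = B1 b2 w \<theta>s As A"
  define \<beta> where "\<beta> = beta1 w \<theta>s As A"
  define \<gamma> where "\<gamma> = gamma1 w A"
  define \<alpha> where "\<alpha> = 3 * C1 * C2"
  define \<kappa> where "\<kappa> = kappa3 b3 \<alpha>"
  define E where "E = norm Z + norm Bv + \<beta> * \<kappa>"
  define \<rho> where "\<rho> = 2 / \<sigma> * E"
  have sp: "\<sigma> > 0" using sigma_pos by (simp add: \<sigma>_def Iv_def w_def \<theta>s_def)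
  have sm1: "E \<le> \<sigma> * C1 / 2" using small1
    by (simp add: E_def \<sigma>_def Iv_def w_def \<theta>s_def Z_def yy_def Bv_def \<beta>_def \<kappa>_def \<alpha>_def)
  have sm2: "E \<le> \<sigma>^2 / (4 * \<gamma> * \<kappa>)" if "\<gamma> * \<kappa> \<noteq> 0" using small2 that
    by (simp add: E_def \<sigma>_def Iv_def w_def \<theta>s_def Z_def yy_def Bv_def \<beta>_def \<kappa>_def \<alpha>_def \<gamma>_def)
  have w0: "w j \<ge> 0" for j using omega01[of i j] by (auto simp: w_def)
  have n\<theta>: "norm \<theta>s \<le> C1" using two_to_inf_ge[of Theta i] Theta_bd by (simp add: \<theta>s_def)
  have nAs: "norm (As j) \<le> C2" for j using two_to_inf_ge[of As j] As_bd by simp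
  have nA: "norm (A j) \<le> C2" for j using two_to_inf_ge[of A j] A_bd by simp
  have \<alpha>p: "\<alpha> > 0" using C1_pos C2_pos by (simp add: \<alpha>_def)
  have bddk: "bdd_above ((\<lambda>x. \<bar>b3 x\<bar>) ` {-\<alpha>..\<alpha>})"
  proof -
    have "continuous_on {-\<alpha>..\<alpha>} (\<lambda>x. \<bar>b3 x\<bar>)"
      by (intro continuous_intros continuous_on_subset[OF cont_b3]) auto
    then have "compact ((\<lambda>x. \<bar>b3 x\<bar>) ` {-\<alpha>..\<alpha>})" by (rule compact_continuous_image) simp
    then show ?thesis by (intro bounded_imp_bdd_above compact_imp_bounded)
  qed
  have kb: "\<bar>b3 t\<bar> \<le> \<kappa>" if "\<bar>t\<bar> \<le> \<alpha>" for t
    unfolding \<kappa>_def kappa3_def using that by (intro cSUP_upper[OF _ bddk]) auto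
  have k0: "\<kappa> \<ge> 0" using kb[of 0] \<alpha>p by simp
  define d where "d j = (A j - As j) \<bullet> \<theta>s" for j
  have bddb: "bdd_above ((\<lambda>u. \<Sum>j\<in>UNIV. w j * ((A j - As j) \<bullet> \<theta>s)\<^sup>2 * \<bar>A j \<bullet> u\<bar>) ` sphere 0 1)"
  proof (rule bdd_aboveI2)
    fix u :: "real^'r" assume "u \<in> sphere 0 1"
    then have nu: "norm u = 1" by simp
    show "(\<Sum>j\<in>UNIV. w j * ((A j - As j) \<bullet> \<theta>s)\<^sup>2 * \<bar>A j \<bullet> u\<bar>) \<le> (\<Sum>j\<in>UNIV. w j * ((A j - As j) \<bullet> \<theta>s)\<^sup>2 * norm (A j))"
    proof (rule sum_mono)
      fix j
      have "\<bar>A j \<bullet> u\<bar> \<le> norm (A j)" using Cauchy_Schwarz_ineq2[of "A j" u] nu by simp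
      then show "w j * ((A j - As j) \<bullet> \<theta>s)\<^sup>2 * \<bar>A j \<bullet> u\<bar> \<le> w j * ((A j - As j) \<bullet> \<theta>s)\<^sup>2 * norm (A j)"
        using w0[of j] by (intro mult_left_mono) auto
    qed
  qed
  have bb: "(\<Sum>j\<in>UNIV. w j * (d j)\<^sup>2 * \<bar>A j \<bullet> u\<bar>) \<le> \<beta>" if "norm u = 1" for u
    unfolding \<beta>_def beta1_def d_def using that by (intro cSUP_upper[OF _ bddb]) auto
  have bddg: "bdd_above ((\<lambda>u. \<Sum>j\<in>UNIV. w j * \<bar>A j \<bullet> u\<bar> ^ 3) ` sphere 0 1)"
  proof (rule bdd_aboveI2)
    fix u :: "real^'r" assume "u \<in> sphere 0 1"
    then have nu: "norm u = 1" by simp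
    show "(\<Sum>j\<in>UNIV. w j * \<bar>A j \<bullet> u\<bar> ^ 3) \<le> (\<Sum>j\<in>UNIV. w j * norm (A j) ^ 3)"
    proof (rule sum_mono)
      fix j
      have "\<bar>A j \<bullet> u\<bar> \<le> norm (A j)" using Cauchy_Schwarz_ineq2[of "A j" u] nu by simp
      then show "w j * \<bar>A j \<bullet> u\<bar> ^ 3 \<le> w j * norm (A j) ^ 3"
        by (intro mult_left_mono power_mono) (auto intro: w0)
    qed
  qed
  have gb: "(\<Sum>j\<in>UNIV. w j * \<bar>A j \<bullet> u\<bar> ^ 3) \<le> \<gamma>" if "u \<in> sphere 0 1" for u
    unfolding \<gamma>_def gamma1_def using that by (intro cSUP_upper[OF _ bddg]) auto
  obtain u1 :: "real^'r" where u1: "norm u1 = 1"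
    using vector_choose_size[of 1] by auto
  have b0: "\<beta> \<ge> 0"
  proof -
    have "0 \<le> (\<Sum>j\<in>UNIV. w j * (d j)\<^sup>2 * \<bar>A j \<bullet> u1\<bar>)" by (intro sum_nonneg) (simp add: w0)
    then show ?thesis using bb[OF u1] by linarith
  qed
  have g0: "\<gamma> \<ge> 0"
  proof -
    have "0 \<le> (\<Sum>j\<in>UNIV. w j * \<bar>A j \<bullet> u1\<bar> ^ 3)" by (intro sum_nonneg) (simp add: w0)
    then show ?thesis using gb[of u1] u1 by simp
  qed
  have E0: "E \<ge> 0" unfolding E_def using b0 k0 by simp
  have \<rho>0: "\<rho> \<ge> 0" unfolding \<rho>_def using sp E0 by simp
  have \<rho>C1: "\<rho> \<le> C1"
  proof -
    have "\<rho> = 2 * E / \<sigma>" by (simp add: \<rho>_def)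
    also have "\<dots> \<le> 2 * (\<sigma> * C1 / 2) / \<sigma>" using sm1 sp by (intro divide_right_mono) auto
    also have "\<dots> = C1" using sp by simp
    finally show ?thesis .
  qed
  define f where "f x = Iv *v x" for x :: "real^'r"
  have lf: "linear f" unfolding f_def by simp
  have flow: "\<sigma> * norm x \<le> norm (f x)" for x
    unfolding f_def \<sigma>_def sigma_min_def by (rule eig_lower)
  have injf: "inj f"
  proof (rule injI)
    fix x x' assume "f x = f x'"
    then have "f (x - x') = 0" using lf by (simp add: linear_diff)
    then have "\<sigma> * norm (x - x') \<le> 0" using flow[of "x - x'"] by simp
    then show "x = x'" using sp by (simp add: mult_le_0_iff)
  qed
  have "surj f" using linear_injective_imp_surjective lf injf by blast
  then obtain g where lg: "linear g" and fg: "f \<circ> g = id"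
    using linear_surjective_right_inverse[OF lf] by blast
  have fgx: "f (g z) = z" for z using fg by (metis comp_apply id_apply)
  have gbound: "\<sigma> * norm (g z) \<le> norm z" for z using flow[of "g z"] fgx[of z] by simp
  have cg: "continuous_on UNIV g" using lg by (simp add: linear_conv_bounded_linear linear_continuous_on)
  define Sc where "Sc \<delta> = \<phi> *\<^sub>R S1 \<phi> b1 w yy A (\<theta>s + \<delta>)" for \<delta>
  define m where "m j = \<theta>s \<bullet> As j" for j
  define R where "R \<delta> = (\<Sum>j\<in>UNIV. (w j * (b1 (A j \<bullet> (\<theta>s + \<delta>)) - b1 (m j) - b2 (m j) * (A j \<bullet> (\<theta>s + \<delta>) - m j))) *\<^sub>R A j)" for \<delta>
  have ident: "f \<delta> + Sc \<delta> = Z - Bv - R \<delta>" for \<delta>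
  proof -
    have Sc: "Sc \<delta> = (\<Sum>j\<in>UNIV. (w j * (yy j - b1 (A j \<bullet> (\<theta>s + \<delta>)))) *\<^sub>R A j)"
      using phi_pos by (simp add: Sc_def S1_def)
    have "f \<delta> + Sc \<delta> = (\<Sum>j\<in>UNIV. (w j * b2 (m j) * (A j \<bullet> \<delta>) + w j * (yy j - b1 (A j \<bullet> (\<theta>s + \<delta>)))) *\<^sub>R A j)"
      unfolding f_def Iv_def I1_mult Sc by (simp add: sum.distrib[symmetric] scaleR_add_left m_def)
    also have "\<dots> = (\<Sum>j\<in>UNIV. ((yy j - b1 (\<theta>s \<bullet> As j)) * w j - w j * b2 (\<theta>s \<bullet> As j) * ((A j - As j) \<bullet> \<theta>s)
         - w j * (b1 (A j \<bullet> (\<theta>s + \<delta>)) - b1 (m j) - b2 (m j) * (A j \<bullet> (\<theta>s + \<delta>) - m j))) *\<^sub>R A j)"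
    proof (rule sum.cong[OF refl])
      fix j
      have "As j \<bullet> \<theta>s = \<theta>s \<bullet> As j" by (rule inner_commute)
      then show "(w j * b2 (m j) * (A j \<bullet> \<delta>) + w j * (yy j - b1 (A j \<bullet> (\<theta>s + \<delta>)))) *\<^sub>R A j =
        ((yy j - b1 (\<theta>s \<bullet> As j)) * w j - w j * b2 (\<theta>s \<bullet> As j) * ((A j - As j) \<bullet> \<theta>s)
         - w j * (b1 (A j \<bullet> (\<theta>s + \<delta>)) - b1 (m j) - b2 (m j) * (A j \<bullet> (\<theta>s + \<delta>) - m j))) *\<^sub>R A j"
        by (simp add: m_def inner_add_right inner_diff_left algebra_simps)
    qed
    also have "\<dots> = Z - Bv - R \<delta>"
      unfolding Z_def ZOA_def Bv_def B1_def R_def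
      by (simp add: sum_subtractf[symmetric] scaleR_diff_left)
    finally show ?thesis .
  qed
  have Rb: "norm (R \<delta>) \<le> \<kappa> * (\<gamma> * (norm \<delta>)^2 + \<beta>)" if nd: "norm \<delta> \<le> C1" for \<delta>
  proof -
    have rj: "\<bar>b1 (A j \<bullet> (\<theta>s + \<delta>)) - b1 (m j) - b2 (m j) * (A j \<bullet> (\<theta>s + \<delta>) - m j)\<bar>
        \<le> \<kappa> * ((A j \<bullet> \<delta>)^2 + (d j)^2)" for j
    proof -
      have h1: "\<bar>A j \<bullet> (\<theta>s + \<delta>)\<bar> \<le> \<alpha>"
      proof -
        have "\<bar>A j \<bullet> (\<theta>s + \<delta>)\<bar> \<le> norm (A j) * norm (\<theta>s + \<delta>)" by (rule Cauchy_Schwarz_ineq2)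
        also have "\<dots> \<le> C2 * (C1 + C1)"
          using nA[of j] n\<theta> nd norm_triangle_ineq[of \<theta>s \<delta>] C2_pos
          by (intro mult_mono) auto
        finally show ?thesis unfolding \<alpha>_def using C1_pos C2_pos by (simp add: algebra_simps)
      qed
      have h2: "\<bar>m j\<bar> \<le> \<alpha>"
      proof -
        have "\<bar>m j\<bar> \<le> norm \<theta>s * norm (As j)" unfolding m_def by (rule Cauchy_Schwarz_ineq2)
        also have "\<dots> \<le> C1 * C2" using nAs[of j] n\<theta> C1_pos by (intro mult_mono) auto
        finally show ?thesis unfolding \<alpha>_def using C1_pos C2_pos by (simp add: algebra_simps)
      qed
      have "\<bar>b1 (A j \<bullet> (\<theta>s + \<delta>)) - b1 (m j) - b2 (m j) * (A j \<bullet> (\<theta>s + \<delta>) - m j)\<bar>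
          \<le> \<kappa> / 2 * (A j \<bullet> (\<theta>s + \<delta>) - m j)^2"
        by (rule taylor2[OF db1 db2 h1 h2 kb])
      moreover have eqh: "A j \<bullet> (\<theta>s + \<delta>) - m j = A j \<bullet> \<delta> + d j"
        by (simp add: m_def d_def inner_add_right inner_diff_left inner_diff_right inner_commute)
      moreover have "\<kappa> / 2 * (A j \<bullet> \<delta> + d j)^2 \<le> \<kappa> * ((A j \<bullet> \<delta>)^2 + (d j)^2)"
      proof -
        have "(A j \<bullet> \<delta> + d j)^2 \<le> 2 * ((A j \<bullet> \<delta>)^2 + (d j)^2)"
          using zero_le_power2[of "A j \<bullet> \<delta> - d j"] by (simp add: power2_eq_square algebra_simps)
        then have "\<kappa> / 2 * (A j \<bullet> \<delta> + d j)^2 \<le> \<kappa> / 2 * (2 * ((A j \<bullet> \<delta>)^2 + (d j)^2))"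
          using k0 by (intro mult_left_mono) auto
        then show ?thesis by (simp add: algebra_simps)
      qed
      ultimately show ?thesis by simp
    qed
    have ub: "\<bar>R \<delta> \<bullet> u\<bar> \<le> \<kappa> * (\<gamma> * (norm \<delta>)^2 + \<beta>)" if nu: "norm u = 1" for u
    proof -
      have "\<bar>R \<delta> \<bullet> u\<bar> = \<bar>\<Sum>j\<in>UNIV. w j * (b1 (A j \<bullet> (\<theta>s + \<delta>)) - b1 (m j) - b2 (m j) * (A j \<bullet> (\<theta>s + \<delta>) - m j)) * (A j \<bullet> u)\<bar>"
        by (simp add: R_def inner_sum_left)
      also have "\<dots> \<le> (\<Sum>j\<in>UNIV. \<bar>w j * (b1 (A j \<bullet> (\<theta>s + \<delta>)) - b1 (m j) - b2 (m j) * (A j \<bullet> (\<theta>s + \<delta>) - m j)) * (A j \<bullet> u)\<bar>)"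
        by (rule sum_abs)
      also have "\<dots> \<le> (\<Sum>j\<in>UNIV. \<kappa> * (w j * (A j \<bullet> \<delta>)^2 * \<bar>A j \<bullet> u\<bar>) + \<kappa> * (w j * (d j)^2 * \<bar>A j \<bullet> u\<bar>))"
      proof (rule sum_mono)
        fix j
        have "\<bar>w j * (b1 (A j \<bullet> (\<theta>s + \<delta>)) - b1 (m j) - b2 (m j) * (A j \<bullet> (\<theta>s + \<delta>) - m j)) * (A j \<bullet> u)\<bar>
            = w j * \<bar>A j \<bullet> u\<bar> * \<bar>b1 (A j \<bullet> (\<theta>s + \<delta>)) - b1 (m j) - b2 (m j) * (A j \<bullet> (\<theta>s + \<delta>) - m j)\<bar>"
          using w0[of j] by (simp add: abs_mult)
        also have "\<dots> \<le> w j * \<bar>A j \<bullet> u\<bar> * (\<kappa> * ((A j \<bullet> \<delta>)^2 + (d j)^2))"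
          using w0[of j] by (intro mult_left_mono rj) auto
        also have "\<dots> = \<kappa> * (w j * (A j \<bullet> \<delta>)^2 * \<bar>A j \<bullet> u\<bar>) + \<kappa> * (w j * (d j)^2 * \<bar>A j \<bullet> u\<bar>)"
          by (simp add: algebra_simps)
        finally show "\<bar>w j * (b1 (A j \<bullet> (\<theta>s + \<delta>)) - b1 (m j) - b2 (m j) * (A j \<bullet> (\<theta>s + \<delta>) - m j)) * (A j \<bullet> u)\<bar>
            \<le> \<kappa> * (w j * (A j \<bullet> \<delta>)^2 * \<bar>A j \<bullet> u\<bar>) + \<kappa> * (w j * (d j)^2 * \<bar>A j \<bullet> u\<bar>)" .
      qed
      also have "\<dots> = \<kappa> * (\<Sum>j\<in>UNIV. w j * (A j \<bullet> \<delta>)^2 * \<bar>A j \<bullet> u\<bar>) + \<kappa> * (\<Sum>j\<in>UNIV. w j * (d j)^2 * \<bar>A j \<bullet> u\<bar>)"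
        by (simp add: sum.distrib sum_distrib_left)
      also have "\<dots> \<le> \<kappa> * (\<gamma> * (norm \<delta>)^2) + \<kappa> * \<beta>"
        using cube_bound[of w A \<gamma> u \<delta>, OF w0 gb nu] bb[OF nu] k0
        by (intro add_mono mult_left_mono) auto
      finally show ?thesis by (simp add: algebra_simps)
    qed
    show ?thesis
    proof (cases "R \<delta> = 0")
      case True then show ?thesis using k0 g0 b0 by simp
    next
      case False
      have "norm (R \<delta>) = \<bar>R \<delta> \<bullet> ((1 / norm (R \<delta>)) *\<^sub>R R \<delta>)\<bar>"
        using False by (simp add: power2_norm_eq_inner[symmetric] power2_eq_square)
      also have "\<dots> \<le> \<kappa> * (\<gamma> * (norm \<delta>)^2 + \<beta>)" using False by (intro ub) simp
      finally show ?thesis .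
    qed
  qed
  define F where "F \<delta> = \<delta> + g (Sc \<delta>)" for \<delta>
  have Fmap: "norm (F \<delta>) \<le> \<rho>" if "\<delta> \<in> cball 0 \<rho>" for \<delta>
  proof -
    have nd: "norm \<delta> \<le> \<rho>" using that by simp
    then have ndC: "norm \<delta> \<le> C1" using \<rho>C1 by simp
    have "f (F \<delta>) = f \<delta> + Sc \<delta>" unfolding F_def using lf fgx by (simp add: linear_add)
    then have "\<sigma> * norm (F \<delta>) \<le> norm (Z - Bv - R \<delta>)" using flow[of "F \<delta>"] ident[of \<delta>] by simp
    also have "\<dots> \<le> norm Z + norm Bv + norm (R \<delta>)" using norm_triangle_ineq4[of "Z - Bv" "R \<delta>"] norm_triangle_ineq4[of Z Bv] by linarith
    also have "\<dots> \<le> norm Z + norm Bv + \<kappa> * (\<gamma> * (norm \<delta>)^2 + \<beta>)" using Rb[OF ndC] by simp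
    also have "\<dots> = E + \<kappa> * \<gamma> * (norm \<delta>)^2" by (simp add: E_def algebra_simps)
    also have "\<dots> \<le> E + \<kappa> * \<gamma> * \<rho>^2"
      using k0 g0 nd by (intro add_left_mono mult_left_mono power_mono) auto
    also have "\<dots> \<le> \<sigma> * \<rho>"
    proof (cases "\<gamma> * \<kappa> = 0")
      case True
      then have "\<kappa> * \<gamma> * \<rho>^2 = 0" by auto
      moreover have "\<sigma> * \<rho> = 2 * E" using sp by (simp add: \<rho>_def)
      ultimately show ?thesis using E0 by linarith
    next
      case False
      then have gk: "\<gamma> * \<kappa> > 0" using g0 k0 by (simp add: less_le)
      have "E \<le> \<sigma>^2 / (4 * \<gamma> * \<kappa>)" using sm2 False by blast
      then have "4 * \<gamma> * \<kappa> * E \<le> \<sigma>^2" using gk by (simp add: le_divide_eq algebra_simps)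
      have "\<kappa> * \<gamma> * \<rho>^2 = E * (4 * \<gamma> * \<kappa> * E) / \<sigma>^2"
        unfolding \<rho>_def by (simp add: power2_eq_square power_divide)
      also have "\<dots> \<le> E * \<sigma>^2 / \<sigma>^2"
        using \<open>4 * \<gamma> * \<kappa> * E \<le> \<sigma>^2\<close> E0 by (intro divide_right_mono mult_left_mono) auto
      also have "\<dots> = E" using sp by simp
      finally have "\<kappa> * \<gamma> * \<rho>^2 \<le> E" .
      moreover have "\<sigma> * \<rho> = 2 * E" using sp by (simp add: \<rho>_def)
      ultimately show ?thesis by linarith
    qed
    finally have "\<sigma> * norm (F \<delta>) \<le> \<sigma> * \<rho>" .
    then show ?thesis using sp by (meson mult_le_cancel_left_pos)
  qed
  have cb1: "continuous_on UNIV b1" using db1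
    by (meson DERIV_isCont continuous_at_imp_continuous_on)
  have cSc: "continuous_on (cball 0 \<rho>) Sc"
  proof -
    have "continuous_on (cball 0 \<rho>) (\<lambda>\<delta>. b1 (A j \<bullet> (\<theta>s + \<delta>)))" for j
      by (rule continuous_on_compose2[OF cb1]) (intro continuous_intros, auto)
    then show ?thesis unfolding Sc_def S1_def by (intro continuous_intros)
  qed
  have cF: "continuous_on (cball 0 \<rho>) F"
    unfolding F_def
    by (intro continuous_intros continuous_on_compose2[OF cg cSc]) auto
  obtain \<delta> where d\<delta>: "\<delta> \<in> cball 0 \<rho>" and fix\<delta>: "F \<delta> = \<delta>"
    using brouwer[of "cball 0 \<rho>" F] cF Fmap \<rho>0 by auto
  have "g (Sc \<delta>) = 0" using fix\<delta> by (simp add: F_def)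
  then have "Sc \<delta> = 0" using fgx[of "Sc \<delta>"] lf by (metis linear_0)
  then have S0: "S1 \<phi> b1 w yy A (\<theta>s + \<delta>) = 0" using phi_pos by (simp add: Sc_def)
  have "norm \<delta> \<le> \<rho>" using d\<delta> by simp
  then show ?thesis
    using S0 \<rho>C1
    by (intro exI[of _ "\<theta>s + \<delta>"])
       (simp add: \<rho>_def E_def \<sigma>_def Iv_def w_def \<theta>s_def Z_def yy_def Bv_def \<beta>_def \<kappa>_def \<alpha>_def)
qed

end
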